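(* Let $G$ be a compact Lie group, $Q$ a smooth manifold with a smooth $G$-action, and $T\leq G$ a closed abelian subgroup such that $Q$ has only finitely many $T$-isotropy types. For $s,t\in T$ write $s\sim t$ iff $Q^s=Q^t$, with $[t]$ the class of $t$. Suppose $s,t\in T$ satisfy $[s]\cap\overline{[t]}\neq\emptyset$. Then for every connected component $[s]^\circ$ of $[s]$ and every connected component $[t]^\circ$ of $[t]$ with $[s]^\circ\cap\overline{[t]^\circ}\neq\emptyset$, one has $[s]^\circ\subseteq\overline{[t]^\circ}$.
   Context: For $t\in G$, $Q^t=\{q\in Q: tq=q\}$. "Finitely many $T$-isotropy types" means only finitely many distinct isotropy groups $T_q=\{t\in T: tq=q\}$, $q\in Q$, occur. *)

theory Defs
  imports "HOL-Analysis.Analysis"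
begin

text \<open>C-infinity maps between Euclidean spaces on an open set: differentiable, and every
  directional derivative is again C-infinity (coinductively, i.e. derivatives of all orders).\<close>
coinductive smooth_on :: "'a::euclidean_space set \<Rightarrow> ('a \<Rightarrow> 'b::euclidean_space) \<Rightarrow> bool" where
  "open U \<Longrightarrow> f differentiable_on U \<Longrightarrow>
   (\<forall>v. smooth_on U (\<lambda>x. frechet_derivative f (at x) v)) \<Longrightarrow> smooth_on U f"

definition smooth_map_on :: "'a::euclidean_space set \<Rightarrow> ('a \<Rightarrow> 'b::euclidean_space) \<Rightarrow> bool" where
  "smooth_map_on S f \<longleftrightarrow> (\<forall>p\<in>S. \<exists>U g. open U \<and> p \<in> U \<and> smooth_on U g \<and> (\<forall>x\<in>S \<inter> U. f x = g x))"

definition diffeo_on :: "'a::euclidean_space set \<Rightarrow> 'a set \<Rightarrow> ('a \<Rightarrow> 'a) \<Rightarrow> bool" where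
  "diffeo_on U V \<phi> \<longleftrightarrow> open U \<and> open V \<and> smooth_on U \<phi> \<and>
     (\<exists>\<psi>. smooth_on V \<psi> \<and> (\<forall>x\<in>U. \<phi> x \<in> V \<and> \<psi> (\<phi> x) = x) \<and> (\<forall>y\<in>V. \<psi> y \<in> U \<and> \<phi> (\<psi> y) = y))"

text \<open>Embedded smooth submanifold of a Euclidean space (by Whitney, every smooth manifold is
  diffeomorphic to one): locally straightened by a diffeomorphism to a coordinate subspace.\<close>
definition smooth_submanifold :: "'a::euclidean_space set \<Rightarrow> bool" where
  "smooth_submanifold M \<longleftrightarrow> (\<forall>p\<in>M. \<exists>B\<subseteq>(Basis::'a set). \<exists>U V \<phi>. p \<in> U \<and> diffeo_on U V \<phi> \<and>
      \<phi> ` (M \<inter> U) = V \<inter> {x. \<forall>i\<in>Basis - B. x \<bullet> i = 0})"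

text \<open>Compact Lie group, realised as a compact subgroup of GL(n,R) (Peter-Weyl / Cartan).\<close>
definition compact_matrix_group :: "(real^'n^'n) set \<Rightarrow> bool" where
  "compact_matrix_group G \<longleftrightarrow> compact G \<and> mat 1 \<in> G \<and> (\<forall>g\<in>G. invertible g) \<and>
     (\<forall>g\<in>G. \<forall>h\<in>G. g ** h \<in> G) \<and> (\<forall>g\<in>G. matrix_inv g \<in> G)"

definition smooth_action :: "(real^'n^'n) set \<Rightarrow> 'e::euclidean_space set \<Rightarrow> (real^'n^'n \<Rightarrow> 'e \<Rightarrow> 'e) \<Rightarrow> bool" where
  "smooth_action G Q act \<longleftrightarrow> (\<forall>q\<in>Q. act (mat 1) q = q) \<and>
     (\<forall>g\<in>G. \<forall>h\<in>G. \<forall>q\<in>Q. act (g ** h) q = act g (act h q)) \<and>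
     (\<forall>g\<in>G. \<forall>q\<in>Q. act g q \<in> Q) \<and>
     smooth_map_on (G \<times> Q) (\<lambda>(g, q). act g q)"

definition closed_abelian_subgroup :: "(real^'n^'n) set \<Rightarrow> (real^'n^'n) set \<Rightarrow> bool" where
  "closed_abelian_subgroup T G \<longleftrightarrow> T \<subseteq> G \<and> closed T \<and> mat 1 \<in> T \<and>
     (\<forall>s\<in>T. \<forall>t\<in>T. s ** t \<in> T \<and> s ** t = t ** s) \<and> (\<forall>t\<in>T. matrix_inv t \<in> T)"

definition fixset :: "'e set \<Rightarrow> ('g \<Rightarrow> 'e \<Rightarrow> 'e) \<Rightarrow> 'g \<Rightarrow> 'e set" where
  "fixset Q act t = {q\<in>Q. act t q = q}"

definition isotropy :: "'g set \<Rightarrow> ('g \<Rightarrow> 'e \<Rightarrow> 'e) \<Rightarrow> 'e \<Rightarrow> 'g set" where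
  "isotropy T act q = {t\<in>T. act t q = q}"

definition fixclass :: "'g set \<Rightarrow> 'e set \<Rightarrow> ('g \<Rightarrow> 'e \<Rightarrow> 'e) \<Rightarrow> 'g \<Rightarrow> 'g set" where
  "fixclass T Q act t = {s\<in>T. fixset Q act s = fixset Q act t}"

end

theory Submission
  imports Defs
begin


lemma isCont_exp_gen: "isCont exp (x::'a::{real_normed_algebra_1,banach})"
proof -
  define R where "R = norm x + 1"
  have ul: "uniform_limit (ball 0 R) (\<lambda>n (y::'a). \<Sum>i<n. y^i /\<^sub>R fact i) (\<lambda>y. \<Sum>i. y^i /\<^sub>R fact i) sequentially"
  proof (rule Weierstrass_m_test[where M="\<lambda>i. R^i /\<^sub>R fact i" and f="\<lambda>i y. y^i /\<^sub>R fact i"])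
    fix n and y :: 'a assume "y \<in> ball 0 R"
    then have "norm y \<le> R" by simp
    have "norm (y ^ n /\<^sub>R fact n) = norm (y^n) / fact n" by (simp add: divide_inverse mult.commute)
    also have "\<dots> \<le> norm y ^ n / fact n"
      by (intro divide_right_mono norm_power_ineq) simp
    also have "\<dots> \<le> R ^ n / fact n"
      by (intro divide_right_mono power_mono \<open>norm y \<le> R\<close>) auto
    finally show "norm (y ^ n /\<^sub>R fact n) \<le> R ^ n /\<^sub>R fact n" by (simp add: divide_inverse mult.commute)
  next
    show "summable (\<lambda>i. R ^ i /\<^sub>R fact i)" by (rule summable_exp_generic)
  qed
  have "continuous_on (ball 0 R) (\<lambda>y::'a. \<Sum>i. y^i /\<^sub>R fact i)"
    by (rule uniform_limit_theorem[OF _ ul]) (auto intro!: always_eventually continuous_intros)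
  then have "continuous_on (ball 0 R) (exp::'a\<Rightarrow>'a)" by (simp add: exp_def)
  moreover have "x \<in> ball 0 R" by (simp add: R_def)
  ultimately show ?thesis
    using continuous_on_eq_continuous_at open_ball by blast
qed

lemma continuous_on_exp_gen: "continuous_on S (exp :: 'a::{real_normed_algebra_1,banach} \<Rightarrow> 'a)"
  by (simp add: continuous_at_imp_continuous_on isCont_exp_gen)

lemma exp_remainder_bound:
  fixes h :: "'a::{real_normed_algebra_1,banach}"
  assumes "norm h \<le> 1"
  shows "norm (exp h - 1 - h) \<le> norm h ^ 2"
proof -
  let ?f = "\<lambda>n. inverse (fact (n + 2)) *\<^sub>R (h ^ (n + 2))"
  let ?g = "\<lambda>n. inverse (fact (n + 2)) * (norm h ^ (n + 2))"
  have sg: "summable ?g"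
  proof -
    have "summable (\<lambda>n. norm h ^ (n+2) /\<^sub>R fact (n+2))"
      using summable_ignore_initial_segment[OF summable_exp_generic[of "norm h"], of 2] by simp
    then show ?thesis by (simp add: divide_inverse_commute mult.commute)
  qed
  have le: "norm (?f n) \<le> ?g n" for n
  proof -
    have "norm (?f n) = inverse (fact (n + 2)) * norm (h ^ (n + 2))" by simp
    also have "\<dots> \<le> ?g n" by (intro mult_left_mono norm_power_ineq) simp
    finally show ?thesis .
  qed
  have snf: "summable (\<lambda>n. norm (?f n))"
    by (rule summable_comparison_test[OF _ sg], rule exI[of _ 0], intro allI impI, simp only: real_norm_def abs_norm_cancel, rule le)
  have "exp h - 1 - h = suminf ?f" using exp_first_two_terms[of h] by simp
  then have "norm (exp h - 1 - h) \<le> (\<Sum>n. norm (?f n))" using summable_norm[OF snf] by simp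
  also have "\<dots> \<le> suminf ?g" by (rule suminf_le[OF le snf sg])
  also have "suminf ?g = exp (norm h) - 1 - norm h" using exp_first_two_terms[of "norm h"] by simp
  also have "\<dots> \<le> norm h ^ 2" using exp_bound[of "norm h"] assms by simp
  finally show ?thesis .
qed

lemma exp_has_derivative_0:
  "(exp has_derivative (\<lambda>h. h)) (at (0::'a::{real_normed_algebra_1,banach}))"
proof -
  have "((\<lambda>y. (exp y - exp 0 - (y - 0)) /\<^sub>R norm (y - 0)) \<longlongrightarrow> (0::'a)) (at 0)"
  proof (rule Lim_null_comparison)
    show "\<forall>\<^sub>F y in at (0::'a). norm ((exp y - exp 0 - (y - 0)) /\<^sub>R norm (y - 0)) \<le> norm y"
    proof -
      have "\<forall>\<^sub>F y in at (0::'a). norm y < 1"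
        using eventually_at_ball'[of 1 "0::'a" UNIV] by (auto elim!: eventually_mono simp: dist_norm)
      then show ?thesis
      proof (rule eventually_mono)
        fix y :: 'a assume "norm y < 1"
        then have "norm (exp y - 1 - y) \<le> norm y ^ 2" by (intro exp_remainder_bound) simp
        show "norm ((exp y - exp 0 - (y - 0)) /\<^sub>R norm (y - 0)) \<le> norm y"
        proof (cases "y = 0")
          case False
          then have "norm y > 0" by simp
          have "norm ((exp y - exp 0 - (y - 0)) /\<^sub>R norm (y - 0)) = norm (exp y - 1 - y) / norm y" by (simp add: divide_inverse mult.commute)
          also have "\<dots> \<le> norm y ^ 2 / norm y" by (rule divide_right_mono[OF \<open>norm (exp y - 1 - y) \<le> norm y ^ 2\<close>]) simp
          also have "\<dots> = norm y" using \<open>norm y > 0\<close> by (simp add: power2_eq_square)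
          finally show ?thesis .
        qed simp
      qed
    qed
    show "((\<lambda>y. norm y) \<longlongrightarrow> 0) (at (0::'a))"
      using tendsto_norm_zero[OF tendsto_ident_at[of "0::'a" UNIV]] by simp
  qed
  from tendsto_norm[OF this] show ?thesis
    unfolding has_derivative_at by (simp add: bounded_linear_ident divide_inverse mult.commute)
qed


lemma exp_quot_tendsto:
  fixes X :: "'a::{real_normed_algebra_1,banach}"
  shows "((\<lambda>t::real. (exp (t *\<^sub>R X) - 1) /\<^sub>R t) \<longlongrightarrow> X) (at 0)"
proof -
  have "((\<lambda>t::real. (exp (t *\<^sub>R X) - 1) /\<^sub>R t - X) \<longlongrightarrow> 0) (at 0)"
  proof (rule Lim_null_comparison)
    have pos: "0 < norm X + 1" using norm_ge_zero[of X] by linarith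
    have "\<forall>\<^sub>F t in at (0::real). \<bar>t\<bar> < 1 / (norm X + 1)"
      unfolding eventually_at by (rule exI[of _ "1 / (norm X + 1)"]) (use pos in \<open>auto simp: dist_norm\<close>)
    moreover have "\<forall>\<^sub>F t in at (0::real). t \<noteq> 0" by (simp add: eventually_at_filter)
    ultimately show "\<forall>\<^sub>F t in at (0::real). norm ((exp (t *\<^sub>R X) - 1) /\<^sub>R t - X) \<le> \<bar>t\<bar> * norm X ^ 2"
    proof eventually_elim
      case (elim t)
      have "\<bar>t\<bar> * norm X \<le> 1"
      proof -
        have "\<bar>t\<bar> * norm X \<le> \<bar>t\<bar> * (norm X + 1)" by (simp add: mult_left_mono)
        also have "\<dots> \<le> 1" using elim(1) pos by (simp add: less_divide_eq)
        finally show ?thesis .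
      qed
      then have nb: "norm (exp (t *\<^sub>R X) - 1 - t *\<^sub>R X) \<le> norm (t *\<^sub>R X) ^ 2"
        by (intro exp_remainder_bound) simp
      have "(exp (t *\<^sub>R X) - 1) /\<^sub>R t - X = (exp (t *\<^sub>R X) - 1 - t *\<^sub>R X) /\<^sub>R t"
        using elim(2) by (simp add: algebra_simps)
      then have "norm ((exp (t *\<^sub>R X) - 1) /\<^sub>R t - X) = norm (exp (t *\<^sub>R X) - 1 - t *\<^sub>R X) / \<bar>t\<bar>"
        by (simp add: divide_inverse mult.commute)
      also have "\<dots> \<le> norm (t *\<^sub>R X) ^ 2 / \<bar>t\<bar>" by (rule divide_right_mono[OF nb]) simp
      also have "\<dots> = \<bar>t\<bar> * norm X ^ 2" using elim(2) by (simp add: power2_eq_square)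
      finally show ?case .
    qed
    have "((\<lambda>t::real. \<bar>t\<bar> * norm X ^ 2) \<longlongrightarrow> \<bar>0\<bar> * norm X ^ 2) (at 0)"
      by (intro tendsto_intros)
    then show "((\<lambda>t::real. \<bar>t\<bar> * norm X ^ 2) \<longlongrightarrow> 0) (at 0)" by simp
  qed
  then show ?thesis by (rule LIM_zero_cancel)
qed

lemma exp_commute_imp:
  fixes X Y :: "'a::{real_normed_algebra_1,banach}"
  assumes "\<And>t::real. exp (t *\<^sub>R X) * exp (t *\<^sub>R Y) = exp (t *\<^sub>R Y) * exp (t *\<^sub>R X)"
  shows "X * Y = Y * X"
proof -
  let ?a = "\<lambda>t::real. (exp (t *\<^sub>R X) - 1) /\<^sub>R t"
  let ?b = "\<lambda>t::real. (exp (t *\<^sub>R Y) - 1) /\<^sub>R t"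
  have 1: "((\<lambda>t. ?a t * ?b t) \<longlongrightarrow> X * Y) (at 0)"
    by (intro tendsto_mult exp_quot_tendsto)
  have 2: "((\<lambda>t. ?b t * ?a t) \<longlongrightarrow> Y * X) (at 0)"
    by (intro tendsto_mult exp_quot_tendsto)
  have eq: "?a t * ?b t = ?b t * ?a t" for t
  proof -
    have "(exp (t *\<^sub>R X) - 1) * (exp (t *\<^sub>R Y) - 1) = (exp (t *\<^sub>R Y) - 1) * (exp (t *\<^sub>R X) - 1)"
      using assms[of t] by (simp add: algebra_simps)
    then show ?thesis by (simp add: mult_scaleR_left mult_scaleR_right)
  qed
  have "((\<lambda>t. ?a t * ?b t) \<longlongrightarrow> Y * X) (at 0)" using 2 by (simp only: eq)
  with 1 show ?thesis using tendsto_unique[OF at_neq_bot] by blast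
qed


typedef (overloaded) 'n sqm = "UNIV :: (real^'n::finite^'n) set"
  morphisms Rep_sqm Abs_sqm by auto

setup_lifting type_definition_sqm

lemma bl_mat: "bounded_linear ((*v) (A::real^'n::finite^'n))"
  by simp

instantiation sqm :: (finite) real_normed_algebra_1
begin

lift_definition norm_sqm :: "'a sqm \<Rightarrow> real" is "\<lambda>A. onorm ((*v) A)" .
lift_definition minus_sqm :: "'a sqm \<Rightarrow> 'a sqm \<Rightarrow> 'a sqm" is "(-)" .
lift_definition plus_sqm :: "'a sqm \<Rightarrow> 'a sqm \<Rightarrow> 'a sqm" is "(+)" .
lift_definition uminus_sqm :: "'a sqm \<Rightarrow> 'a sqm" is "uminus" .
lift_definition zero_sqm :: "'a sqm" is "0" .
lift_definition one_sqm :: "'a sqm" is "mat 1" .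
lift_definition times_sqm :: "'a sqm \<Rightarrow> 'a sqm \<Rightarrow> 'a sqm" is "(**)" .
lift_definition scaleR_sqm :: "real \<Rightarrow> 'a sqm \<Rightarrow> 'a sqm" is "scaleR" .

definition dist_sqm :: "'a sqm \<Rightarrow> 'a sqm \<Rightarrow> real"
  where "dist_sqm a b = norm (a - b)"

definition uniformity_sqm_def:
  "(uniformity :: ('a sqm \<times> 'a sqm) filter) = (INF e\<in>{0 <..}. principal {(x, y). dist x y < e})"

definition open_sqm :: "'a sqm set \<Rightarrow> bool"
  where "open_sqm S = (\<forall>x\<in>S. \<forall>\<^sub>F (x', y) in uniformity. x' = x \<longrightarrow> y \<in> S)"

definition sgn_sqm :: "'a sqm \<Rightarrow> 'a sqm"
  where "sgn_sqm x = scaleR (inverse (norm x)) x"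

instance
proof
  fix a b c :: "'a sqm" and r s :: real
  show "a * b * c = a * (b * c)" by transfer (simp add: matrix_mul_assoc)
  show "(a + b) * c = a * c + b * c" by transfer (vector matrix_matrix_mult_def sum.distrib[symmetric] field_simps)
  show "a * (b + c) = a * b + a * c" by transfer (simp add: matrix_add_ldistrib)
  show "1 * a = a" by transfer simp
  show "a * 1 = a" by transfer simp
  show "(0::'a sqm) \<noteq> 1" by transfer (simp add: vec_eq_iff mat_def)
  show "a + b + c = a + (b + c)" by transfer simp
  show "a + b = b + a" by transfer simp
  show "0 + a = a" by transfer simp
  show "- a + a = 0" by transfer simp
  show "a - b = a + - b" by transfer simp
  show "r *\<^sub>R (a + b) = r *\<^sub>R a + r *\<^sub>R b" by transfer (simp add: scaleR_add_right)
  show "(r + s) *\<^sub>R a = r *\<^sub>R a + s *\<^sub>R a" by transfer (simp add: scaleR_add_left)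
  show "r *\<^sub>R s *\<^sub>R a = (r * s) *\<^sub>R a" by transfer simp
  show "1 *\<^sub>R a = a" by transfer simp
  show "r *\<^sub>R a * b = r *\<^sub>R (a * b)" by transfer (simp add: scalar_matrix_assoc)
  show "a * r *\<^sub>R b = r *\<^sub>R (a * b)" by transfer (simp add: matrix_scalar_ac scalar_matrix_assoc)
  show "dist a b = norm (a - b)" by (simp add: dist_sqm_def)
  show "sgn a = inverse (norm a) *\<^sub>R a" by (simp add: sgn_sqm_def)
  show "(uniformity :: ('a sqm \<times> 'a sqm) filter) = (INF e\<in>{0 <..}. principal {(x, y). dist x y < e})"
    by (simp add: uniformity_sqm_def)
  show "\<And>U :: 'a sqm set. open U = (\<forall>x\<in>U. \<forall>\<^sub>F (x', y) in uniformity. x' = x \<longrightarrow> y \<in> U)"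
    by (simp add: open_sqm_def)
  show "norm (1::'a sqm) = 1"
  proof transfer
    have "(*v) (mat 1::real^'a^'a) = (\<lambda>x. x)" by (rule ext) simp
    then show "onorm ((*v) (mat 1::real^'a^'a)) = 1" using onorm_id by simp
  qed
  show "norm (a * b) \<le> norm a * norm b"
    apply transfer
    using onorm_compose[OF bl_mat bl_mat]
    by (simp add: o_def matrix_vector_mul_assoc mult.commute)
  show "(norm a = 0) = (a = 0)"
    apply transfer
    apply (simp add: onorm_eq_0)
    by (metis matrix_vector_mult_0 matrix_eq)
  show "norm (a + b) \<le> norm a + norm b"
  proof transfer
    fix a b :: "real^'a^'a"
    have "(*v) (a + b) = (\<lambda>x. a *v x + b *v x)" by (rule ext) (simp add: matrix_vector_mult_add_rdistrib)
    then show "onorm ((*v) (a + b)) \<le> onorm ((*v) a) + onorm ((*v) b)"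
      using onorm_triangle[OF bl_mat bl_mat, of a b] by simp
  qed
  show "norm (r *\<^sub>R a) = \<bar>r\<bar> * norm a"
    apply transfer
    using onorm_scaleR[OF bl_mat]
    by (simp add: scaleR_matrix_vector_assoc)
qed
end

lemma norm_le_onorm_mat:
  fixes A :: "real^'n::finite^'n"
  shows "norm A \<le> real (CARD('n))^2 * onorm ((*v) A)"
proof -
  have "norm A \<le> (\<Sum>i\<in>UNIV. norm (A$i))" by (simp add: norm_vec_def L2_set_le_sum)
  also have "\<dots> \<le> (\<Sum>i\<in>(UNIV::'n set). \<Sum>j\<in>(UNIV::'n set). onorm ((*v) A))"
  proof (rule sum_mono)
    fix i
    have "norm (A$i) \<le> (\<Sum>j\<in>UNIV. \<bar>A$i$j\<bar>)" using norm_le_l1_cart[of "A$i"] by simp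
    also have "\<dots> \<le> (\<Sum>j\<in>(UNIV::'n set). onorm ((*v) A))"
      by (rule sum_mono) (rule matrix_component_le_onorm)
    finally show "norm (A$i) \<le> (\<Sum>j\<in>(UNIV::'n set). onorm ((*v) A))" .
  qed
  also have "\<dots> = real (CARD('n))^2 * onorm ((*v) A)" by (simp add: power2_eq_square)
  finally show ?thesis .
qed

lemma onorm_le_norm_mat:
  fixes A :: "real^'n::finite^'n"
  shows "onorm ((*v) A) \<le> real (CARD('n))^2 * norm A"
proof -
  have "onorm ((*v) A) \<le> (\<Sum>i\<in>UNIV. \<Sum>j\<in>UNIV. \<bar>A $ i $ j\<bar>)" by (rule onorm_le_matrix_component_sum)
  also have "\<dots> \<le> (\<Sum>i\<in>(UNIV::'n set). \<Sum>j\<in>(UNIV::'n set). norm A)"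
  proof (intro sum_mono)
    fix i j
    have "\<bar>A $ i $ j\<bar> \<le> norm (A$i)" by (rule component_le_norm_cart)
    also have "\<dots> \<le> norm A" by (rule Finite_Cartesian_Product.norm_nth_le)
    finally show "\<bar>A $ i $ j\<bar> \<le> norm A" .
  qed
  also have "\<dots> = real (CARD('n))^2 * norm A" by (simp add: power2_eq_square)
  finally show ?thesis .
qed

lemma bounded_linear_Rep_sqm: "bounded_linear Rep_sqm"
proof (rule bounded_linear_intro[where K="real (CARD('n))^2"])
  fix x y :: "'n::finite sqm" and r :: real
  show "Rep_sqm (x + y) = Rep_sqm x + Rep_sqm y" by transfer simp
  show "Rep_sqm (r *\<^sub>R x) = r *\<^sub>R Rep_sqm x" by transfer simp
  show "norm (Rep_sqm x) \<le> norm x * real (CARD('n))^2"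
    using norm_le_onorm_mat[of "Rep_sqm x"] by (simp add: norm_sqm.rep_eq mult.commute)
qed

lemma bounded_linear_Abs_sqm: "bounded_linear (Abs_sqm :: real^'n::finite^'n \<Rightarrow> 'n sqm)"
proof (rule bounded_linear_intro[where K="real (CARD('n))^2"])
  fix x y :: "real^'n^'n" and r :: real
  show "Abs_sqm (x + y) = (Abs_sqm x + Abs_sqm y :: 'n sqm)" by (simp add: plus_sqm.abs_eq)
  show "Abs_sqm (r *\<^sub>R x) = (r *\<^sub>R Abs_sqm x :: 'n sqm)" by (simp add: scaleR_sqm.abs_eq)
  show "norm (Abs_sqm x :: 'n sqm) \<le> norm x * real (CARD('n))^2"
    using onorm_le_norm_mat[of x] by (simp add: norm_sqm.abs_eq mult.commute)
qed

instance sqm :: (finite) banach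
proof
  fix X :: "nat \<Rightarrow> 'a sqm"
  assume "Cauchy X"
  then have "Cauchy (\<lambda>n. Rep_sqm (X n))"
    by (rule bounded_linear.Cauchy[OF bounded_linear_Rep_sqm])
  then obtain L where "(\<lambda>n. Rep_sqm (X n)) \<longlonglongrightarrow> L"
    using convergent_eq_Cauchy by blast
  then have "(\<lambda>n. Abs_sqm (Rep_sqm (X n)) :: 'a sqm) \<longlonglongrightarrow> Abs_sqm L"
    by (rule bounded_linear.tendsto[OF bounded_linear_Abs_sqm])
  then show "convergent X" by (auto simp: Rep_sqm_inverse convergent_def)
qed


lemma matrix_add_rdistrib': "((B + C) ** A) = (B ** A) + (C ** (A::real^'n::finite^'n))"
  by (simp add: matrix_matrix_mult_def vec_eq_iff distrib_right sum.distrib)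

lemma mneg_left: "(- A) ** B = - (A ** (B::real^'n::finite^'n))"
  by (simp add: matrix_matrix_mult_def vec_eq_iff sum_negf)

lemma mneg_right: "A ** (- B) = - (A ** (B::real^'n::finite^'n))"
  by (simp add: matrix_matrix_mult_def vec_eq_iff sum_negf)

lemma bilinear_mmult: "bilinear ((**) :: real^'n::finite^'n \<Rightarrow> real^'n^'n \<Rightarrow> real^'n^'n)"
proof -
  have l1: "linear (\<lambda>y. x ** y)" for x :: "real^'n^'n"
    by (rule linearI) (simp_all add: matrix_add_ldistrib matrix_scalar_ac scalar_matrix_assoc)
  have l2: "linear (\<lambda>x. x ** y)" for y :: "real^'n^'n"
    by (rule linearI) (simp_all add: matrix_add_rdistrib' scalar_matrix_assoc)
  show ?thesis unfolding bilinear_def using l1 l2 by blast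
qed

lemma bounded_bilinear_mmult: "bounded_bilinear ((**) :: real^'n::finite^'n \<Rightarrow> real^'n^'n \<Rightarrow> real^'n^'n)"
  using bilinear_mmult bilinear_conv_bounded_bilinear by blast

lemma continuous_on_mmult[continuous_intros]:
  fixes f g :: "'a::topological_space \<Rightarrow> real^'n::finite^'n"
  shows "continuous_on S f \<Longrightarrow> continuous_on S g \<Longrightarrow> continuous_on S (\<lambda>x. f x ** g x)"
  by (rule bounded_bilinear.continuous_on[OF bounded_bilinear_mmult])

lemma tendsto_mmult[tendsto_intros]:
  fixes f g :: "'a \<Rightarrow> real^'n::finite^'n"
  shows "(f \<longlongrightarrow> a) F \<Longrightarrow> (g \<longlongrightarrow> b) F \<Longrightarrow> ((\<lambda>x. f x ** g x) \<longlongrightarrow> a ** b) F"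
  by (rule bounded_bilinear.tendsto[OF bounded_bilinear_mmult])

definition mexp :: "real^'n::finite^'n \<Rightarrow> real^'n^'n" where
  "mexp X = Rep_sqm (exp (Abs_sqm X))"

lemma Rep_times: "Rep_sqm (a * b) = Rep_sqm a ** Rep_sqm b" by (rule times_sqm.rep_eq)
lemma Abs_times: "Abs_sqm (A ** B) = Abs_sqm A * Abs_sqm B" by (simp add: times_sqm.abs_eq)
lemma Abs_plus: "Abs_sqm (A + B) = Abs_sqm A + Abs_sqm B" by (simp add: plus_sqm.abs_eq)
lemma Abs_scaleR: "Abs_sqm (r *\<^sub>R A) = r *\<^sub>R Abs_sqm A" by (simp add: scaleR_sqm.abs_eq)
lemma Abs_uminus: "Abs_sqm (- A) = - Abs_sqm A" by (simp add: uminus_sqm.abs_eq)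
lemma Abs_zero: "Abs_sqm 0 = 0" by (simp add: zero_sqm.abs_eq)

lemma mexp_zero: "mexp 0 = mat 1"
  by (simp add: mexp_def Abs_zero one_sqm.rep_eq)

lemma mexp_add:
  assumes "X ** Y = Y ** X"
  shows "mexp (X + Y) = mexp X ** mexp Y"
proof -
  have "Abs_sqm X * Abs_sqm Y = Abs_sqm Y * Abs_sqm X"
    using assms by (simp add: Abs_times[symmetric])
  then show ?thesis
    by (simp add: mexp_def Abs_plus exp_add_commuting Rep_times)
qed

lemma mexp_scale_add: "mexp (s *\<^sub>R X) ** mexp (t *\<^sub>R X) = mexp ((s + t) *\<^sub>R X)"
  by (subst mexp_add[symmetric]) (simp_all add: matrix_scalar_ac scalar_matrix_assoc scaleR_add_left mult.commute)

lemma mexp_neg_left: "mexp (- X) ** mexp X = mat 1"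
  using mexp_add[of "-X" X] by (simp add: mexp_zero mneg_left mneg_right)

lemma mexp_neg_right: "mexp X ** mexp (- X) = mat 1"
  using mexp_add[of X "-X"] by (simp add: mexp_zero mneg_left mneg_right)

lemma continuous_on_mexp: "continuous_on S mexp"
  unfolding mexp_def
  by (intro continuous_on_compose2[OF linear_continuous_on[OF bounded_linear_Rep_sqm] _ subset_UNIV]
      continuous_on_compose2[OF continuous_on_exp_gen _ subset_UNIV]
      linear_continuous_on[OF bounded_linear_Abs_sqm])

lemma mexp_has_derivative_0: "(mexp has_derivative (\<lambda>h. h)) (at (0::real^'n::finite^'n))"
proof -
  have "((\<lambda>X::real^'n^'n. Rep_sqm (exp (Abs_sqm X))) has_derivative (\<lambda>h. Rep_sqm (Abs_sqm h))) (at 0)"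
  proof (rule bounded_linear.has_derivative[OF bounded_linear_Rep_sqm])
    have "(exp has_derivative (\<lambda>h. h)) (at (Abs_sqm (0::real^'n^'n)))"
      using exp_has_derivative_0 by (simp add: Abs_zero)
    from has_derivative_compose[OF bounded_linear.has_derivative[OF bounded_linear_Abs_sqm has_derivative_ident] this]
    show "((\<lambda>X. exp (Abs_sqm X)) has_derivative (\<lambda>h. Abs_sqm h)) (at (0::real^'n^'n))" by simp
  qed
  moreover have "mexp = (\<lambda>X::real^'n^'n. Rep_sqm (exp (Abs_sqm X)))" by (rule ext) (simp add: mexp_def)
  ultimately show ?thesis by (simp add: Abs_sqm_inverse)
qed

lemma mexp_commute_imp:
  assumes "\<And>t::real. mexp (t *\<^sub>R X) ** mexp (t *\<^sub>R Y) = mexp (t *\<^sub>R Y) ** mexp (t *\<^sub>R X)"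
  shows "X ** Y = Y ** X"
proof -
  have "exp (t *\<^sub>R Abs_sqm X) * exp (t *\<^sub>R Abs_sqm Y) = exp (t *\<^sub>R Abs_sqm Y) * exp (t *\<^sub>R Abs_sqm X)" for t
    using assms[of t] unfolding mexp_def Abs_scaleR Rep_times[symmetric] by (simp add: Rep_sqm_inject)
  then have "Abs_sqm X * Abs_sqm Y = Abs_sqm Y * Abs_sqm X" by (rule exp_commute_imp)
  then show ?thesis by (simp add: Abs_times[symmetric] Abs_sqm_inject)
qed


lemma inv_props:
  fixes A :: "real^'n::finite^'n"
  assumes "invertible A"
  shows "A ** matrix_inv A = mat 1" "matrix_inv A ** A = mat 1"
proof -
  obtain B where "A ** B = mat 1 \<and> B ** A = mat 1" using assms unfolding invertible_def by blast
  then have "A ** matrix_inv A = mat 1 \<and> matrix_inv A ** A = mat 1"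
    unfolding matrix_inv_def by (rule someI)
  then show "A ** matrix_inv A = mat 1" "matrix_inv A ** A = mat 1" by auto
qed

lemma inv_unique_mat:
  fixes A B :: "real^'n::finite^'n"
  assumes "invertible A" "B ** A = mat 1"
  shows "B = matrix_inv A"
proof -
  have "A ** matrix_inv A = mat 1"
    using inv_props(1)[OF assms(1)] .
  then have "B = (B ** A) ** matrix_inv A" by (simp add: matrix_mul_assoc[symmetric])
  then show ?thesis using assms(2) by simp
qed

locale mgrp =
  fixes K :: "(real^'n::finite^'n) set"
  assumes K_closed: "closed K"
    and K_one: "mat 1 \<in> K"
    and K_mult: "\<And>a b. a \<in> K \<Longrightarrow> b \<in> K \<Longrightarrow> a ** b \<in> K"
    and K_inv: "\<And>a. a \<in> K \<Longrightarrow> matrix_inv a \<in> K"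
    and K_invertible: "\<And>a. a \<in> K \<Longrightarrow> invertible a"
    and K_comm: "\<And>a b. a \<in> K \<Longrightarrow> b \<in> K \<Longrightarrow> a ** b = b ** a"
begin

definition hM :: "(real^'n^'n) set" where
  "hM = {X. \<forall>t::real. mexp (t *\<^sub>R X) \<in> K}"

lemma hM_K:
  assumes "X \<in> hM" shows "mexp X \<in> K"
proof -
  from assms have "\<forall>t::real. mexp (t *\<^sub>R X) \<in> K" by (simp add: hM_def)
  then have "mexp (1 *\<^sub>R X) \<in> K" by blast
  then show ?thesis by simp
qed

lemma subspace_hM: "subspace hM"
  unfolding subspace_def
proof (intro conjI ballI allI)
  show "0 \<in> hM" by (simp add: hM_def mexp_zero K_one)
next
  fix c :: real and x assume x: "x \<in> hM"
  show "c *\<^sub>R x \<in> hM" unfolding hM_def mem_Collect_eq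
  proof
    fix t :: real
    from x have "\<forall>t::real. mexp (t *\<^sub>R x) \<in> K" by (simp add: hM_def)
    then have "mexp ((t * c) *\<^sub>R x) \<in> K" by blast
    then show "mexp (t *\<^sub>R c *\<^sub>R x) \<in> K" by simp
  qed
next
  fix x y assume x: "x \<in> hM" and y: "y \<in> hM"
  have c: "x ** y = y ** x"
  proof (rule mexp_commute_imp)
    fix t :: real
    have "mexp (t *\<^sub>R x) \<in> K" "mexp (t *\<^sub>R y) \<in> K" using x y by (auto simp: hM_def)
    then show "mexp (t *\<^sub>R x) ** mexp (t *\<^sub>R y) = mexp (t *\<^sub>R y) ** mexp (t *\<^sub>R x)"
      by (rule K_comm)
  qed
  show "x + y \<in> hM" unfolding hM_def mem_Collect_eq
  proof
    fix t :: real
    have "(t *\<^sub>R x) ** (t *\<^sub>R y) = (t *\<^sub>R y) ** (t *\<^sub>R x)"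
    proof -
      have e: "(t *\<^sub>R a) ** (t *\<^sub>R b) = (t * t) *\<^sub>R (a ** b)" for a b :: "real^'n^'n"
        by (simp add: matrix_scalar_ac scalar_matrix_assoc[symmetric])
      show ?thesis by (simp only: e c)
    qed
    then have "mexp (t *\<^sub>R (x + y)) = mexp (t *\<^sub>R x) ** mexp (t *\<^sub>R y)"
      by (simp add: scaleR_add_right mexp_add)
    moreover have "mexp (t *\<^sub>R x) \<in> K" "mexp (t *\<^sub>R y) \<in> K" using x y by (auto simp: hM_def)
    ultimately show "mexp (t *\<^sub>R (x + y)) \<in> K" by (simp add: K_mult)
  qed
qed

lemma hM_neg: "X \<in> hM \<Longrightarrow> - X \<in> hM"
  by (rule subspace_neg[OF subspace_hM])

lemma mexp_int_K:
  assumes "mexp Y \<in> K"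
  shows "mexp (real_of_int m *\<^sub>R Y) \<in> K"
proof -
  have natK: "mexp (real n *\<^sub>R Y) \<in> K" for n
  proof (induction n)
    case 0 then show ?case by (simp add: mexp_zero K_one)
  next
    case (Suc n)
    have "mexp (real (Suc n) *\<^sub>R Y) = mexp (real n *\<^sub>R Y) ** mexp (1 *\<^sub>R Y)"
      using mexp_scale_add[of "real n" Y 1] by (simp add: add.commute)
    then show ?case using Suc assms by (simp add: K_mult)
  qed
  have neg: "mexp (- real n *\<^sub>R Y) \<in> K" for n
  proof -
    have "invertible (mexp (real n *\<^sub>R Y))" using K_invertible[OF natK] .
    then have "mexp (- (real n *\<^sub>R Y)) = matrix_inv (mexp (real n *\<^sub>R Y))"
      by (rule inv_unique_mat[OF _ mexp_neg_left])
    then have "mexp (- (real n *\<^sub>R Y)) \<in> K" using K_inv[OF natK] by simp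
    then show ?thesis by (simp only: scaleR_minus_left)
  qed
  show ?thesis
  proof (cases "m \<ge> 0")
    case True
    then have "real_of_int m = real (nat m)" by simp
    then show ?thesis using natK[of "nat m"] by (simp only:)
  next
    case False
    then have "real_of_int m = - real (nat (- m))" by simp
    then show ?thesis using neg[of "nat (- m)"] by (simp only:)
  qed
qed

end


context mgrp
begin

lemma proj_ex: "\<exists>P. linear P \<and> (\<forall>x. P x \<in> hM) \<and> (\<forall>v\<in>hM. P v = v)"
proof -
  have "linear (\<lambda>x::real^'n^'n. x)" by (rule linearI) simp_all
  from linear_exists_left_inverse_on[OF this subspace_hM inj_on_id2]
  show ?thesis by auto
qed

definition Pm :: "real^'n^'n \<Rightarrow> real^'n^'n" where
  "Pm = (SOME P. linear P \<and> (\<forall>x. P x \<in> hM) \<and> (\<forall>v\<in>hM. P v = v))"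

lemma Pm_props: "linear Pm" "\<And>x. Pm x \<in> hM" "\<And>v. v \<in> hM \<Longrightarrow> Pm v = v"
proof -
  have "linear Pm \<and> (\<forall>x. Pm x \<in> hM) \<and> (\<forall>v\<in>hM. Pm v = v)"
    unfolding Pm_def by (rule someI_ex[OF proj_ex])
  then show "linear Pm" "\<And>x. Pm x \<in> hM" "\<And>v. v \<in> hM \<Longrightarrow> Pm v = v" by auto
qed

lemma Pm_bl: "bounded_linear Pm"
  using Pm_props(1) linear_conv_bounded_linear by blast

lemma Pm_idem: "Pm (Pm x) = Pm x"
  using Pm_props by blast

lemma isCont_mexp: "isCont mexp x"
  using continuous_on_mexp[of UNIV] continuous_on_eq_continuous_at open_UNIV by blast

lemma no_small: "\<exists>\<epsilon>>0. \<forall>Y. Pm Y = 0 \<longrightarrow> norm Y < \<epsilon> \<longrightarrow> mexp Y \<in> K \<longrightarrow> Y = 0"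
proof (rule ccontr)
  assume "\<not> ?thesis"
  then have "\<forall>\<epsilon>>0. \<exists>Y. Pm Y = 0 \<and> norm Y < \<epsilon> \<and> mexp Y \<in> K \<and> Y \<noteq> 0" by blast
  then have "\<forall>k::nat. \<exists>Y. Pm Y = 0 \<and> norm Y < 1 / real (Suc k) \<and> mexp Y \<in> K \<and> Y \<noteq> 0" by simp
  then obtain Y where Y: "\<And>k. Pm (Y k) = 0 \<and> norm (Y k) < 1 / real (Suc k) \<and> mexp (Y k) \<in> K \<and> Y k \<noteq> 0"
    by metis
  define U where "U k = Y k /\<^sub>R norm (Y k)" for k
  have U_sph: "\<forall>k. U k \<in> sphere 0 1" using Y by (simp add: U_def)
  obtain l r where l: "l \<in> sphere 0 1" "strict_mono r" "(U \<circ> r) \<longlonglongrightarrow> l"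
    using seq_compactE[OF compact_imp_seq_compact[OF compact_sphere] U_sph] by blast
  have PU: "Pm (U k) = 0" for k
    using Y[of k] linear_scale[OF Pm_props(1)] by (simp add: U_def)
  have "(\<lambda>k. Pm (U (r k))) \<longlonglongrightarrow> Pm l"
    using bounded_linear.tendsto[OF Pm_bl l(3)] by (simp add: o_def)
  then have Pl: "Pm l = 0" using PU by (simp add: LIMSEQ_const_iff)
  have "l \<in> hM" unfolding hM_def mem_Collect_eq
  proof
    fix t :: real
    define \<nu> where "\<nu> k = norm (Y (r k))" for k
    have \<nu>pos: "\<nu> k > 0" for k using Y by (simp add: \<nu>_def)
    have "\<nu> k \<le> inverse (real (Suc k))" for k
    proof -
      have "\<nu> k < 1 / real (Suc (r k))" using Y by (simp add: \<nu>_def)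
      also have "\<dots> \<le> 1 / real (Suc k)"
        using seq_suble[OF l(2), of k] by (intro divide_left_mono) auto
      finally show ?thesis by (simp add: divide_inverse)
    qed
    then have \<nu>0: "\<nu> \<longlonglongrightarrow> 0"
      using \<nu>pos by (intro Lim_null_comparison[OF _ LIMSEQ_inverse_real_of_nat]) (auto intro!: always_eventually simp: less_imp_le)
    define n where "n k = \<lfloor>t / \<nu> k\<rfloor>" for k
    have bnd: "\<bar>t - real_of_int (n k) * \<nu> k\<bar> \<le> \<nu> k" for k
    proof -
      have a: "real_of_int (n k) \<le> t / \<nu> k" "t / \<nu> k < real_of_int (n k) + 1"
        unfolding n_def by linarith+
      have "real_of_int (n k) * \<nu> k \<le> t" using a(1) \<nu>pos[of k] by (simp add: le_divide_eq)
      moreover have "t < (real_of_int (n k) + 1) * \<nu> k" using a(2) \<nu>pos[of k] by (simp add: divide_less_eq)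
      ultimately show ?thesis by (simp add: algebra_simps)
    qed
    have "(\<lambda>k. t - real_of_int (n k) * \<nu> k) \<longlonglongrightarrow> 0"
      by (rule Lim_null_comparison[OF _ \<nu>0]) (use bnd in \<open>auto intro!: always_eventually\<close>)
    then have "(\<lambda>k. t - (t - real_of_int (n k) * \<nu> k)) \<longlonglongrightarrow> t - 0"
      by (intro tendsto_intros)
    then have nt: "(\<lambda>k. real_of_int (n k) * \<nu> k) \<longlonglongrightarrow> t" by simp
    have "(\<lambda>k. (real_of_int (n k) * \<nu> k) *\<^sub>R U (r k)) \<longlonglongrightarrow> t *\<^sub>R l"
      using tendsto_scaleR[OF nt l(3)] by (simp add: o_def)
    moreover have "(real_of_int (n k) * \<nu> k) *\<^sub>R U (r k) = real_of_int (n k) *\<^sub>R Y (r k)" for k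
      using \<nu>pos[of k] by (simp add: U_def \<nu>_def)
    ultimately have conv: "(\<lambda>k. real_of_int (n k) *\<^sub>R Y (r k)) \<longlonglongrightarrow> t *\<^sub>R l" by simp
    have lim: "(\<lambda>k. mexp (real_of_int (n k) *\<^sub>R Y (r k))) \<longlonglongrightarrow> mexp (t *\<^sub>R l)"
      by (rule isCont_tendsto_compose[OF isCont_mexp conv])
    have inK: "mexp (real_of_int (n k) *\<^sub>R Y (r k)) \<in> K" for k
      using Y by (intro mexp_int_K) blast
    show "mexp (t *\<^sub>R l) \<in> K"
      by (rule closed_sequentially[OF K_closed inK lim])
  qed
  then have "Pm l = l" by (rule Pm_props(3))
  with Pl l(1) show False by simp
qed

end


context mgrp
begin

lemma local_exp:
  assumes "\<epsilon> > 0"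
  shows "\<exists>r>0. \<forall>k\<in>K. dist k (mat 1) < r \<longrightarrow> (\<exists>X\<in>hM. norm X < \<epsilon> \<and> mexp X = k)"
proof -
  obtain \<epsilon>0 where e0: "\<epsilon>0 > 0" "\<And>Y. Pm Y = 0 \<Longrightarrow> norm Y < \<epsilon>0 \<Longrightarrow> mexp Y \<in> K \<Longrightarrow> Y = 0"
    using no_small by blast
  obtain C where C: "C > 0" "\<And>x. norm (Pm x) \<le> norm x * C"
    using bounded_linear.pos_bounded[OF Pm_bl] by blast
  define \<delta> where "\<delta> = min \<epsilon> \<epsilon>0 / (1 + C)"
  have \<delta>pos: "\<delta> > 0" using assms e0 C by (simp add: \<delta>_def)
  have small: "norm (Pm Z) < \<epsilon> \<and> norm (Z - Pm Z) < \<epsilon>0" if "norm Z < \<delta>" for Z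
  proof -
    have nZ: "norm Z * (1 + C) < min \<epsilon> \<epsilon>0"
      using that C(1) by (simp add: \<delta>_def less_divide_eq)
    have eq: "norm Z * (1 + C) = norm Z + norm Z * C" by (simp add: algebra_simps)
    have "norm (Pm Z) \<le> norm Z * (1 + C)" unfolding eq using C(2)[of Z] norm_ge_zero[of Z] by linarith
    moreover have "norm (Z - Pm Z) \<le> norm Z * (1 + C)"
      using norm_triangle_ineq4[of Z "Pm Z"] C(2)[of Z] by (simp add: algebra_simps)
    ultimately show ?thesis using nZ by linarith
  qed
  define \<Psi> where "\<Psi> Z = mexp (Pm Z) ** mexp (Z - Pm Z)" for Z
  have P0: "Pm 0 = 0" using linear_0[OF Pm_props(1)] .
  have dP: "(Pm has_derivative Pm) (at 0)"
    using Pm_bl by (rule bounded_linear_imp_has_derivative)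
  have dm: "(mexp has_derivative (\<lambda>h. h)) (at (Pm 0))"
    using mexp_has_derivative_0 by (simp add: P0)
  have d1: "((\<lambda>Z. mexp (Pm Z)) has_derivative Pm) (at 0)"
    using has_derivative_compose[OF dP dm] by simp
  have dP2: "((\<lambda>Z. Z - Pm Z) has_derivative (\<lambda>h. h - Pm h)) (at 0)"
    by (intro has_derivative_diff has_derivative_ident dP)
  have dm2: "(mexp has_derivative (\<lambda>h. h)) (at (0 - Pm 0))"
    using mexp_has_derivative_0 by (simp add: P0)
  have d2: "((\<lambda>Z. mexp (Z - Pm Z)) has_derivative (\<lambda>h. h - Pm h)) (at 0)"
    using has_derivative_compose[OF dP2 dm2] by simp
  have dPsi: "(\<Psi> has_derivative (\<lambda>h. h)) (at 0)"
  proof -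
    have "((\<lambda>Z. mexp (Pm Z) ** mexp (Z - Pm Z)) has_derivative
        (\<lambda>h. mexp (Pm 0) ** (h - Pm h) + Pm h ** mexp (0 - Pm 0))) (at 0)"
      by (rule bounded_bilinear.FDERIV[OF bounded_bilinear_mmult d1 d2])
    then show ?thesis
      by (simp add: \<Psi>_def[abs_def] P0 mexp_zero)
  qed
  have contPsi: "continuous_on UNIV \<Psi>"
    unfolding \<Psi>_def[abs_def]
    by (intro continuous_on_mmult continuous_on_compose2[OF continuous_on_mexp]
        linear_continuous_on Pm_bl continuous_on_diff continuous_on_id) auto
  have "\<Psi> 0 \<in> interior (\<Psi> ` ball 0 \<delta>)"
    by (rule sussmann_open_mapping[OF open_UNIV contPsi _ dPsi, of "\<lambda>h. h"]) (use \<delta>pos in auto)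
  moreover have "\<Psi> 0 = mat 1" by (simp add: \<Psi>_def P0 mexp_zero)
  ultimately obtain r where r: "r > 0" "ball (mat 1) r \<subseteq> \<Psi> ` ball 0 \<delta>"
    by (auto simp: mem_interior)
  show ?thesis
  proof (intro exI[of _ r] conjI ballI impI r(1))
    fix k assume k: "k \<in> K" "dist k (mat 1) < r"
    then have "k \<in> ball (mat 1) r" by (simp add: dist_commute)
    with r(2) obtain Z where Z: "norm Z < \<delta>" "k = \<Psi> Z" by auto
    define X where "X = Pm Z"
    define Y where "Y = Z - Pm Z"
    have X: "X \<in> hM" by (simp add: X_def Pm_props(2))
    have PY: "Pm Y = 0"
      using linear_diff[OF Pm_props(1)] Pm_idem by (simp add: Y_def)
    have kXY: "k = mexp X ** mexp Y" using Z by (simp add: \<Psi>_def X_def Y_def)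
    have "mexp (- X) ** k = mexp Y"
      by (simp add: kXY matrix_mul_assoc mexp_neg_left)
    moreover have "mexp (- X) \<in> K" using hM_K[OF hM_neg[OF X]] .
    ultimately have "mexp Y \<in> K" using K_mult k(1) by metis
    moreover have "norm Y < \<epsilon>0" using small[OF Z(1)] by (simp add: Y_def)
    ultimately have "Y = 0" using e0(2) PY by blast
    then have "k = mexp X" using kXY by (simp add: mexp_zero)
    moreover have "norm X < \<epsilon>" using small[OF Z(1)] by (simp add: X_def)
    ultimately show "\<exists>X\<in>hM. norm X < \<epsilon> \<and> mexp X = k" using X by blast
  qed
qed

lemma local_conn:
  assumes "\<epsilon> > 0"
  shows "\<exists>r>0. \<forall>k\<in>K. dist k (mat 1) < r \<longrightarrow>
           (\<exists>C. connected C \<and> C \<subseteq> K \<and> C \<subseteq> ball (mat 1) \<epsilon> \<and> mat 1 \<in> C \<and> k \<in> C)"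
proof -
  obtain \<epsilon>1 where e1: "\<epsilon>1 > 0" "\<And>X::real^'n^'n. dist X 0 < \<epsilon>1 \<Longrightarrow> dist (mexp X) (mexp 0) < \<epsilon>"
    using isCont_mexp[of "0::real^'n^'n"] assms unfolding continuous_at_eps_delta by blast
  obtain r where r: "r > 0" "\<And>k. k \<in> K \<Longrightarrow> dist k (mat 1) < r \<Longrightarrow> \<exists>X\<in>hM. norm X < \<epsilon>1 \<and> mexp X = k"
    using local_exp[OF e1(1)] by blast
  show ?thesis
  proof (intro exI[of _ r] conjI ballI impI r(1))
    fix k assume k: "k \<in> K" "dist k (mat 1) < r"
    then obtain X where X: "X \<in> hM" "norm X < \<epsilon>1" "mexp X = k" using r(2) by blast
    define C where "C = (\<lambda>\<tau>::real. mexp (\<tau> *\<^sub>R X)) ` {0..1}"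
    have "connected C" unfolding C_def
      by (intro connected_continuous_image connected_Icc continuous_on_compose2[OF continuous_on_mexp]
          continuous_intros) auto
    moreover have "C \<subseteq> K" using X(1) by (auto simp: C_def hM_def)
    moreover have "C \<subseteq> ball (mat 1) \<epsilon>"
    proof
      fix c assume "c \<in> C"
      then obtain \<tau> where \<tau>: "\<tau> \<in> {0..1}" "c = mexp (\<tau> *\<^sub>R X)" by (auto simp: C_def)
      have "norm (\<tau> *\<^sub>R X) \<le> norm X" using \<tau>(1) by (simp add: mult_left_le_one_le)
      then have "dist (\<tau> *\<^sub>R X) 0 < \<epsilon>1" using X(2) by simp
      then have "dist (mexp (\<tau> *\<^sub>R X)) (mexp 0) < \<epsilon>" by (rule e1(2))
      then have "dist c (mat 1) < \<epsilon>" using \<tau>(2) by (simp add: mexp_zero)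
      then show "c \<in> ball (mat 1) \<epsilon>" by (simp add: dist_commute)
    qed
    moreover have "mat 1 \<in> C" unfolding C_def by (rule image_eqI[of _ _ 0]) (simp_all add: mexp_zero)
    moreover have "k \<in> C" unfolding C_def by (rule image_eqI[of _ _ 1]) (simp_all add: X(3))
    ultimately show "\<exists>C. connected C \<and> C \<subseteq> K \<and> C \<subseteq> ball (mat 1) \<epsilon> \<and> mat 1 \<in> C \<and> k \<in> C" by blast
  qed
qed

end


lemma smooth_on_cont: "smooth_on U g \<Longrightarrow> continuous_on U g"
  by (auto elim: smooth_on.cases intro: differentiable_imp_continuous_on)

lemma smooth_on_open: "smooth_on U g \<Longrightarrow> open U"
  by (auto elim: smooth_on.cases)

lemma smooth_map_cont:
  assumes "smooth_map_on S f"
  shows "continuous_on S f"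
proof -
  have "continuous (at p within S) f" if p: "p \<in> S" for p
  proof -
    obtain U g where U: "open U" "p \<in> U" "smooth_on U g" "\<forall>x\<in>S \<inter> U. f x = g x"
      using assms p unfolding smooth_map_on_def by blast
    have "isCont g p"
      using smooth_on_cont[OF U(3)] U(1,2) continuous_on_eq_continuous_at by blast
    then have "continuous (at p within S) g" by (rule continuous_at_imp_continuous_within)
    moreover have "openin (top_of_set S) (S \<inter> U)" using U(1) by (rule openin_open_Int)
    ultimately show ?thesis
      by (rule continuous_transform_within_openin) (use U p in auto)
  qed
  then show ?thesis by (simp add: continuous_on_eq_continuous_within)
qed

lemma act_cont_q:
  assumes "smooth_action G Q act" "T \<subseteq> G" "q \<in> Q"
  shows "continuous_on T (\<lambda>t. act t q)"
proof -
  have c: "continuous_on (G \<times> Q) (\<lambda>(g, q). act g q)"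
    using assms(1) unfolding smooth_action_def by (intro smooth_map_cont) blast
  have "continuous_on T (\<lambda>t. (\<lambda>(g, q). act g q) (t, q))"
    by (rule continuous_on_compose2[OF c]) (use assms in \<open>auto intro!: continuous_intros\<close>)
  then show ?thesis by simp
qed

lemma inv_fix:
  assumes "smooth_action G Q act" "compact_matrix_group G" "g \<in> G" "q \<in> Q" "act g q = q"
  shows "act (matrix_inv g) q = q"
proof -
  have gi: "matrix_inv g \<in> G" "invertible g" using assms(2,3) unfolding compact_matrix_group_def by auto
  have comp: "\<forall>g\<in>G. \<forall>h\<in>G. \<forall>q\<in>Q. act (g ** h) q = act g (act h q)" and one: "\<forall>q\<in>Q. act (mat 1) q = q"
    using assms(1) unfolding smooth_action_def by blast+
  have "act (matrix_inv g) q = act (matrix_inv g) (act g q)" using assms(5) by simp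
  also have "\<dots> = act (matrix_inv g ** g) q"
    using comp gi(1) assms(3,4) by simp
  also have "\<dots> = q" using inv_props(2)[OF gi(2)] one assms(4) by simp
  finally show ?thesis .
qed

lemma iso_closed:
  assumes "smooth_action G Q act" "closed_abelian_subgroup T G" "q \<in> Q"
  shows "closed (isotropy T act q)"
proof -
  have T: "T \<subseteq> G" "closed T" using assms(2) unfolding closed_abelian_subgroup_def by auto
  show ?thesis unfolding isotropy_def
    by (rule continuous_closed_preimage_constant[OF act_cont_q[OF assms(1) T(1) assms(3)] T(2)])
qed

lemma usc:
  assumes "smooth_action G Q act" "closed_abelian_subgroup T G" "finite (isotropy T act ` Q)" "u \<in> T"
  shows "\<exists>e>0. \<forall>v\<in>T. dist v u < e \<longrightarrow> fixset Q act v \<subseteq> fixset Q act u"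
proof -
  define Hs where "Hs = {H \<in> isotropy T act ` Q. u \<notin> H}"
  have "finite Hs" using assms(3) by (simp add: Hs_def)
  moreover have "\<forall>H\<in>Hs. closed H" using iso_closed[OF assms(1,2)] by (auto simp: Hs_def)
  ultimately have "closed (\<Union>Hs)" by (rule closed_Union)
  then have op: "open (- \<Union>Hs)" by (simp add: open_Compl)
  have "u \<in> - \<Union>Hs" by (auto simp: Hs_def)
  then obtain e where e: "e > 0" "ball u e \<subseteq> - \<Union>Hs"
    using op open_contains_ball by blast
  show ?thesis
  proof (intro exI[of _ e] conjI ballI impI subsetI e(1))
    fix v q assume v: "v \<in> T" "dist v u < e" and q: "q \<in> fixset Q act v"
    show "q \<in> fixset Q act u"
    proof (rule ccontr)
      assume nq: "q \<notin> fixset Q act u"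
      have qQ: "q \<in> Q" "act v q = q" using q by (auto simp: fixset_def)
      then have "u \<notin> isotropy T act q" using nq by (auto simp: fixset_def isotropy_def)
      then have "isotropy T act q \<in> Hs" using qQ by (auto simp: Hs_def)
      moreover have "v \<in> isotropy T act q" using v qQ by (auto simp: isotropy_def)
      moreover have "v \<in> ball u e" using v by (simp add: dist_commute)
      ultimately show False using e(2) by blast
    qed
  qed
qed

lemma bl_lmult:
  fixes z :: "real^'n::finite^'n"
  shows "bounded_linear (\<lambda>c::real^'n^'n. z ** c)"
  using bounded_bilinear.bounded_linear_right[OF bounded_bilinear_mmult, of z] by simp

lemma isCont_lmult:
  fixes z x :: "real^'n::finite^'n"
  shows "isCont (\<lambda>c. z ** c) x"
  by (rule linear_continuous_at[OF bl_lmult])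

lemma (in mgrp) local_conn_at:
  assumes "z \<in> K" "\<epsilon> > 0"
  shows "\<exists>r>0. \<forall>w\<in>K. dist w z < r \<longrightarrow>
           (\<exists>C. connected C \<and> C \<subseteq> K \<and> C \<subseteq> ball z \<epsilon> \<and> z \<in> C \<and> w \<in> C)"
proof -
  define zi where "zi = matrix_inv z"
  have zi: "zi \<in> K" "z ** zi = mat 1" "zi ** z = mat 1"
    using K_inv[OF assms(1)] inv_props[OF K_invertible[OF assms(1)]] by (auto simp: zi_def)
  obtain \<epsilon>1 where e1: "\<epsilon>1 > 0" "\<And>c::real^'n^'n. dist c (mat 1) < \<epsilon>1 \<Longrightarrow> dist (z ** c) (z ** mat 1) < \<epsilon>"
    using isCont_lmult[where z=z and x="mat 1"] assms(2) unfolding continuous_at_eps_delta by blast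
  obtain r1 where r1: "r1 > 0" "\<And>k. k \<in> K \<Longrightarrow> dist k (mat 1) < r1 \<Longrightarrow>
      \<exists>C. connected C \<and> C \<subseteq> K \<and> C \<subseteq> ball (mat 1) \<epsilon>1 \<and> mat 1 \<in> C \<and> k \<in> C"
    using local_conn[OF e1(1)] by blast
  obtain r where r: "r > 0" "\<And>w::real^'n^'n. dist w z < r \<Longrightarrow> dist (zi ** w) (zi ** z) < r1"
    using isCont_lmult[where z=zi and x=z] r1(1) unfolding continuous_at_eps_delta by blast
  show ?thesis
  proof (intro exI[of _ r] conjI ballI impI r(1))
    fix w assume w: "w \<in> K" "dist w z < r"
    have "dist (zi ** w) (mat 1) < r1" using r(2)[OF w(2)] zi(3) by simp
    then obtain C1 where C1: "connected C1" "C1 \<subseteq> K" "C1 \<subseteq> ball (mat 1) \<epsilon>1" "mat 1 \<in> C1" "zi ** w \<in> C1"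
      using r1(2) K_mult[OF zi(1) w(1)] by blast
    define C where "C = (\<lambda>c. z ** c) ` C1"
    have "connected C" unfolding C_def
      by (rule connected_continuous_image[OF _ C1(1)])
        (rule linear_continuous_on[OF bl_lmult])
    moreover have "C \<subseteq> K" using C1(2) K_mult[OF assms(1)] by (auto simp: C_def)
    moreover have "C \<subseteq> ball z \<epsilon>"
    proof
      fix c assume "c \<in> C"
      then obtain c1 where c1: "c1 \<in> C1" "c = z ** c1" by (auto simp: C_def)
      have "dist c1 (mat 1) < \<epsilon>1" using C1(3) c1(1) by (auto simp: dist_commute)
      then have "dist (z ** c1) (z ** mat 1) < \<epsilon>" by (rule e1(2))
      then show "c \<in> ball z \<epsilon>" using c1(2) by (simp add: dist_commute)
    qed
    moreover have "z \<in> C" unfolding C_def by (rule image_eqI[of _ _ "mat 1"]) (simp_all add: C1(4))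
    moreover have "w \<in> C" unfolding C_def
      by (rule image_eqI[of _ _ "zi ** w"]) (simp_all add: C1(5) matrix_mul_assoc zi(2))
    ultimately show "\<exists>C. connected C \<and> C \<subseteq> K \<and> C \<subseteq> ball z \<epsilon> \<and> z \<in> C \<and> w \<in> C" by blast
  qed
qed


lemma mmult_bound: "\<exists>Kb>0. \<forall>(a::real^'n::finite^'n) (b::real^'n^'n). norm (a ** b) \<le> norm a * norm b * Kb"
proof -
  interpret bounded_bilinear "(**) :: real^'n^'n \<Rightarrow> real^'n^'n \<Rightarrow> real^'n^'n"
    by (rule bounded_bilinear_mmult)
  show ?thesis using pos_bounded by blast
qed

theorem mainTheorem2:
  fixes G T :: "(real^'n^'n) set" and Q :: "'e::euclidean_space set"
    and act :: "real^'n^'n \<Rightarrow> 'e \<Rightarrow> 'e" and s t :: "real^'n^'n"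
  assumes "compact_matrix_group G"
    and "smooth_submanifold Q"
    and "smooth_action G Q act"
    and "closed_abelian_subgroup T G"
    and "finite (isotropy T act ` Q)"
    and "s \<in> T" and "t \<in> T"
    and "fixclass T Q act s \<inter> closure (fixclass T Q act t) \<noteq> {}"
  shows "\<forall>x\<in>fixclass T Q act s. \<forall>y\<in>fixclass T Q act t.
           connected_component_set (fixclass T Q act s) x \<inter>
             closure (connected_component_set (fixclass T Q act t) y) \<noteq> {} \<longrightarrow>
           connected_component_set (fixclass T Q act s) x \<subseteq>
             closure (connected_component_set (fixclass T Q act t) y)"
proof -
  note cmg = assms(1) and sa = assms(3) and cas = assms(4)
  have Ginv: "\<And>g. g \<in> G \<Longrightarrow> invertible g" "\<And>g. g \<in> G \<Longrightarrow> matrix_inv g \<in> G"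
    using cmg unfolding compact_matrix_group_def by auto
  have comp: "\<And>g h q. g \<in> G \<Longrightarrow> h \<in> G \<Longrightarrow> q \<in> Q \<Longrightarrow> act (g ** h) q = act g (act h q)"
    and one: "\<And>q. q \<in> Q \<Longrightarrow> act (mat 1) q = q"
    and inQ: "\<And>g q. g \<in> G \<Longrightarrow> q \<in> Q \<Longrightarrow> act g q \<in> Q"
    using sa unfolding smooth_action_def by auto
  have TG: "T \<subseteq> G" and Tcl: "closed T" and T1: "mat 1 \<in> T"
    and Tmult: "\<And>a b. a \<in> T \<Longrightarrow> b \<in> T \<Longrightarrow> a ** b \<in> T"
    and Tcomm: "\<And>a b. a \<in> T \<Longrightarrow> b \<in> T \<Longrightarrow> a ** b = b ** a"
    and Tinv: "\<And>a. a \<in> T \<Longrightarrow> matrix_inv a \<in> T"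
    using cas unfolding closed_abelian_subgroup_def by auto
  have invfix: "\<And>g q. g \<in> G \<Longrightarrow> q \<in> Q \<Longrightarrow> act g q = q \<Longrightarrow> act (matrix_inv g) q = q"
    using inv_fix[OF sa cmg] by blast
  define K where "K = {u \<in> T. fixset Q act s \<subseteq> fixset Q act u}"
  have Keq: "K = T \<inter> (\<Inter>q\<in>fixset Q act s. isotropy T act q)"
    unfolding K_def fixset_def isotropy_def by auto
  have mg: "mgrp K"
  proof
    show "closed K" unfolding Keq
      by (intro closed_Int Tcl closed_INT ballI iso_closed[OF sa cas]) (auto simp: fixset_def)
    show "mat 1 \<in> K" using T1 one by (auto simp: K_def fixset_def)
    fix a b assume a: "a \<in> K" and b: "b \<in> K"
    have aT: "a \<in> T" "b \<in> T" using a b by (auto simp: K_def)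
    show "a ** b \<in> K" unfolding K_def
    proof (intro CollectI conjI subsetI)
      show "a ** b \<in> T" using aT by (rule Tmult)
      fix q assume q: "q \<in> fixset Q act s"
      then have "act a q = q" "act b q = q" "q \<in> Q" using a b by (auto simp: K_def fixset_def)
      moreover have "act (a ** b) q = act a (act b q)"
        using comp[of a b q] aT TG \<open>q \<in> Q\<close> by blast
      ultimately show "q \<in> fixset Q act (a ** b)" by (simp add: fixset_def)
    qed
    show "a ** b = b ** a" using aT by (rule Tcomm)
  next
    fix a assume a: "a \<in> K"
    then have aT: "a \<in> T" by (simp add: K_def)
    show "invertible a" using aT TG Ginv by blast
    show "matrix_inv a \<in> K" unfolding K_def
    proof (intro CollectI conjI subsetI)
      show "matrix_inv a \<in> T" using aT by (rule Tinv)
      fix q assume q: "q \<in> fixset Q act s"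
      then have "act a q = q" "q \<in> Q" using a by (auto simp: K_def fixset_def)
      then show "q \<in> fixset Q act (matrix_inv a)" using invfix aT TG by (auto simp: fixset_def)
    qed
  qed
  show ?thesis
  proof (intro ballI impI)
    fix x y
    let ?A = "fixclass T Q act s" and ?B = "fixclass T Q act t"
    let ?Cs = "connected_component_set ?A x" and ?Ct = "connected_component_set ?B y"
    assume ne: "?Cs \<inter> closure ?Ct \<noteq> {}"
    have AK: "?A \<subseteq> K" by (auto simp: fixclass_def K_def)
    have AT: "?A \<subseteq> T" and BT: "?B \<subseteq> T" by (auto simp: fixclass_def)
    have CsA: "?Cs \<subseteq> ?A" and CtB: "?Ct \<subseteq> ?B" by (rule connected_component_subset)+
    have op: "openin (top_of_set ?Cs) (?Cs \<inter> closure ?Ct)"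
      unfolding openin_euclidean_subtopology_iff
    proof (intro conjI ballI)
      show "?Cs \<inter> closure ?Ct \<subseteq> ?Cs" by blast
      fix z assume z: "z \<in> ?Cs \<inter> closure ?Ct"
      have zA: "z \<in> ?A" using z CsA by blast
      have zT: "z \<in> T" and Fz: "fixset Q act z = fixset Q act s" using zA by (auto simp: fixclass_def)
      have zK: "z \<in> K" using zA AK by blast
      obtain e1 where e1: "e1 > 0" "\<And>v. v \<in> T \<Longrightarrow> dist v z < e1 \<Longrightarrow> fixset Q act v \<subseteq> fixset Q act z"
        using usc[OF sa cas assms(5) zT] by blast
      have e12: "e1 / 2 > 0" using e1(1) by simp
      obtain r where r: "r > 0" "\<And>w. w \<in> K \<Longrightarrow> dist w z < r \<Longrightarrow>
          \<exists>C. connected C \<and> C \<subseteq> K \<and> C \<subseteq> ball z (e1/2) \<and> z \<in> C \<and> w \<in> C"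
        using mgrp.local_conn_at[OF mg zK e12] by blast
      show "\<exists>e>0. \<forall>w\<in>?Cs. dist w z < e \<longrightarrow> w \<in> ?Cs \<inter> closure ?Ct"
      proof (intro exI[of _ r] conjI ballI impI r(1))
        fix w assume wC: "w \<in> ?Cs" and wd: "dist w z < r"
        have wK: "w \<in> K" using wC CsA AK by blast
        obtain C where C: "connected C" "C \<subseteq> K" "C \<subseteq> ball z (e1/2)" "z \<in> C" "w \<in> C"
          using r(2)[OF wK wd] by blast
        have "w \<in> closure ?Ct"
          unfolding closure_approachable
        proof (intro allI impI)
          fix \<delta> :: real assume \<delta>: "\<delta> > 0"
          define zi where "zi = matrix_inv z"
          have ziT: "zi \<in> T" using Tinv[OF zT] by (simp add: zi_def)
          have zinv: "z ** zi = mat 1" "zi ** z = mat 1"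
            using inv_props[OF Ginv(1)] zT TG by (auto simp: zi_def)
          obtain Kb where Kb: "Kb > 0" "\<And>(a::real^'n^'n) (b::real^'n^'n). norm (a ** b) \<le> norm a * norm b * Kb"
            using mmult_bound by blast
          define M where "M = (norm z + e1) * Kb * (norm zi * Kb) + 1"
          have M0: "0 \<le> (norm z + e1) * Kb * (norm zi * Kb)"
            using Kb(1) e1(1) by (intro mult_nonneg_nonneg) auto
          then have Mpos: "M > 0" by (simp add: M_def)
          define \<eta> where "\<eta> = min \<delta> (e1/2) / M"
          have \<eta>pos: "\<eta> > 0" using Mpos \<delta> e1(1) by (simp add: \<eta>_def)
          have "z \<in> closure ?Ct" using z by blast
          then obtain y' where y': "y' \<in> ?Ct" "dist y' z < \<eta>"
            using \<eta>pos unfolding closure_approachable by blast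
          have y'T: "y' \<in> T" and Fy': "fixset Q act y' = fixset Q act t"
            using y' CtB by (auto simp: fixclass_def)
          define u where "u = zi ** y'"
          have uT: "u \<in> T" using Tmult[OF ziT y'T] by (simp add: u_def)
          have zu: "z ** u = y'" by (simp add: u_def matrix_mul_assoc zinv)
          have Md: "M * dist y' z < min \<delta> (e1/2)"
            using y'(2) Mpos by (simp add: \<eta>_def less_divide_eq mult.commute)
          have bound: "dist (c ** u) c < min \<delta> (e1/2)" if c: "norm c \<le> norm z + e1" for c :: "real^'n^'n"
          proof -
            have "u - mat 1 = zi ** (y' - z)"
              by (simp add: u_def bounded_bilinear.diff_right[OF bounded_bilinear_mmult] zinv)
            then have a: "norm (u - mat 1) \<le> norm zi * dist y' z * Kb"
              using Kb(2)[of zi "y' - z"] by (simp add: dist_norm)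
            have "c ** u - c = c ** (u - mat 1)"
              by (simp add: bounded_bilinear.diff_right[OF bounded_bilinear_mmult])
            then have "dist (c ** u) c = norm (c ** (u - mat 1))" by (simp add: dist_norm)
            also have "\<dots> \<le> norm c * norm (u - mat 1) * Kb" by (rule Kb(2))
            also have "\<dots> \<le> (norm z + e1) * (norm zi * dist y' z * Kb) * Kb"
              using Kb(1) a c e1(1) norm_ge_zero[of z] by (intro mult_right_mono mult_mono) auto
            also have "\<dots> = ((norm z + e1) * Kb * (norm zi * Kb)) * dist y' z" by (simp add: algebra_simps)
            also have "\<dots> \<le> M * dist y' z" by (intro mult_right_mono) (auto simp: M_def)
            finally show ?thesis using Md by linarith
          qed
          have Cnorm: "norm c \<le> norm z + e1" if "c \<in> C" for c
          proof -
            have "dist z c < e1/2" using that C(3) by auto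
            then have "norm c \<le> norm z + e1/2" using norm_triangle_ineq2[of c z] by (simp add: dist_norm norm_minus_commute)
            then show ?thesis using e1(1) by linarith
          qed
          have Fy'z: "fixset Q act y' \<subseteq> fixset Q act z"
          proof (rule e1(2)[OF y'T])
            have "\<eta> \<le> e1 / 2 / M" unfolding \<eta>_def using Mpos by (intro divide_right_mono) auto
            also have "\<dots> \<le> e1 / 2" using Mpos e1(1) M_def by (simp add: divide_le_eq) (smt (verit) Kb(1) mult_nonneg_nonneg norm_ge_zero)
            finally show "dist y' z < e1" using y'(2) e1(1) by linarith
          qed
          have cuB: "c ** u \<in> ?B" if cC: "c \<in> C" for c
          proof -
            have cK: "c \<in> K" using cC C(2) by blast
            then have cT: "c \<in> T" and Fc: "fixset Q act s \<subseteq> fixset Q act c" by (auto simp: K_def)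
            have cuT: "c ** u \<in> T" using Tmult[OF cT uT] .
            have "dist (c ** u) z \<le> dist (c ** u) c + dist c z" by (rule dist_triangle)
            also have "\<dots> < e1/2 + e1/2"
              using bound[OF Cnorm[OF cC]] C(3) cC by (intro add_strict_mono) (auto simp: dist_commute)
            finally have "dist (c ** u) z < e1" by simp
            then have Fcu: "fixset Q act (c ** u) \<subseteq> fixset Q act z" using e1(2)[OF cuT] by blast
            have cG: "c \<in> G" and uG: "u \<in> G" and zG: "z \<in> G" and ziG: "zi \<in> G" and y'G: "y' \<in> G"
              using cT uT zT ziT y'T TG by auto
            have ciG: "matrix_inv c \<in> G" using Ginv(2)[OF cG] .
            have "fixset Q act (c ** u) = fixset Q act y'"
            proof (intro equalityI subsetI)
              fix q assume q: "q \<in> fixset Q act (c ** u)"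
              then have qQ: "q \<in> Q" and cuq: "act (c ** u) q = q" by (auto simp: fixset_def)
              have qFz: "q \<in> fixset Q act z" using Fcu q by blast
              then have qz: "act z q = q" by (simp add: fixset_def)
              have "q \<in> fixset Q act c" using qFz Fz Fc by blast
              then have qc: "act c q = q" by (simp add: fixset_def)
              have uqQ: "act u q \<in> Q" using inQ[OF uG qQ] .
              have cuq2: "act c (act u q) = q" using cuq comp[OF cG uG qQ] by simp
              have "act (matrix_inv c ** c) (act u q) = act (matrix_inv c) (act c (act u q))"
                using comp[OF ciG cG uqQ] .
              also have "\<dots> = act (matrix_inv c) q" by (simp only: cuq2)
              also have "\<dots> = q" using invfix[OF cG qQ qc] .
              finally have "act (matrix_inv c ** c) (act u q) = q" .
              moreover have "matrix_inv c ** c = mat 1" using inv_props(2)[OF Ginv(1)[OF cG]] .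
              ultimately have uq: "act u q = q" using one[OF uqQ] by simp
              have "act y' q = act (z ** u) q" by (simp only: zu)
              also have "\<dots> = act z (act u q)" using comp[OF zG uG qQ] .
              also have "\<dots> = q" by (simp only: uq qz)
              finally show "q \<in> fixset Q act y'" using qQ by (simp add: fixset_def)
            next
              fix q assume q: "q \<in> fixset Q act y'"
              then have qQ: "q \<in> Q" and yq: "act y' q = q" by (auto simp: fixset_def)
              have qFz: "q \<in> fixset Q act z" using Fy'z q by blast
              then have qz: "act z q = q" by (simp add: fixset_def)
              have "q \<in> fixset Q act c" using qFz Fz Fc by blast
              then have qc: "act c q = q" by (simp add: fixset_def)
              have "act u q = act zi (act y' q)" unfolding u_def using comp[OF ziG y'G qQ] .
              also have "\<dots> = act zi q" by (simp only: yq)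
              also have "\<dots> = q" unfolding zi_def using invfix[OF zG qQ qz] .
              finally have uq: "act u q = q" .
              have "act (c ** u) q = act c (act u q)" using comp[OF cG uG qQ] .
              also have "\<dots> = q" by (simp only: uq qc)
              finally show "q \<in> fixset Q act (c ** u)" using qQ by (simp add: fixset_def)
            qed
            then show ?thesis using cuT Fy' by (simp add: fixclass_def)
          qed
          define I where "I = (\<lambda>c. c ** u) ` C"
          have "connected I" unfolding I_def
            by (rule connected_continuous_image[OF _ C(1)])
              (rule linear_continuous_on[OF bounded_bilinear.bounded_linear_left[OF bounded_bilinear_mmult]])
          moreover have "I \<subseteq> ?B" using cuB by (auto simp: I_def)
          moreover have "y' \<in> I" unfolding I_def using C(4) zu by (auto intro!: image_eqI[of _ _ z])
          ultimately have "I \<subseteq> connected_component_set ?B y'" by (intro connected_component_maximal)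
          also have "\<dots> = ?Ct" by (rule connected_component_eq[OF y'(1)])
          finally have "w ** u \<in> ?Ct" using C(5) by (auto simp: I_def)
          moreover have "dist (w ** u) w < \<delta>" using bound[OF Cnorm[OF C(5)]] by simp
          ultimately show "\<exists>y\<in>?Ct. dist y w < \<delta>" by blast
        qed
        then show "w \<in> ?Cs \<inter> closure ?Ct" using wC by blast
      qed
    qed
    have cl: "closedin (top_of_set ?Cs) (?Cs \<inter> closure ?Ct)"
      by (rule closedin_closed_Int) simp
    have "connected ?Cs" by simp
    then have "?Cs \<inter> closure ?Ct = {} \<or> ?Cs \<inter> closure ?Ct = ?Cs"
      using op cl unfolding connected_clopen by blast
    then show "?Cs \<subseteq> closure ?Ct" using ne by blast
  qed
qed


end
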